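(* For every integer $k\geq 2$, the direct power $\mathbb{N}^k$ contains uncountably many pairwise non-isomorphic subdirect products.
   Context: $\mathbb{N}=\{1,2,3,\dots\}$ is the free monogenic semigroup (positive integers under addition), and $\mathbb{N}^k$ is its $k$-fold direct power with componentwise addition. A subdirect product of $\mathbb{N}^k$ is a subsemigroup $U\leq\mathbb{N}^k$ such that for each $i=1,\dots,k$ the projection of $U$ onto the $i$-th coordinate is all of $\mathbb{N}$. *)

theory Defs
  imports Main "HOL-Library.Countable_Set"
begin

text \<open>The direct power N^k, N = positive integers, elements represented as
functions nat => nat with positive entries at coordinates 0..k-1 and
value 0 at all other coordinates (canonical representatives).\<close>

definition NPow :: "nat \<Rightarrow> (nat \<Rightarrow> nat) set" where
  "NPow k = {v. (\<forall>i<k. 1 \<le> v i) \<and> (\<forall>i\<ge>k. v i = 0)}"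

definition vadd :: "(nat \<Rightarrow> nat) \<Rightarrow> (nat \<Rightarrow> nat) \<Rightarrow> (nat \<Rightarrow> nat)" where
  "vadd v w = (\<lambda>i. v i + w i)"

definition subsemigroup_NPow :: "nat \<Rightarrow> (nat \<Rightarrow> nat) set \<Rightarrow> bool" where
  "subsemigroup_NPow k U \<longleftrightarrow> U \<subseteq> NPow k \<and> (\<forall>u\<in>U. \<forall>v\<in>U. vadd u v \<in> U)"

definition subdirect_product :: "nat \<Rightarrow> (nat \<Rightarrow> nat) set \<Rightarrow> bool" where
  "subdirect_product k U \<longleftrightarrow> subsemigroup_NPow k U \<and>
     (\<forall>i<k. (\<lambda>v. v i) ` U = {n. 1 \<le> n})"

definition sg_isomorphic :: "(nat \<Rightarrow> nat) set \<Rightarrow> (nat \<Rightarrow> nat) set \<Rightarrow> bool" where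
  "sg_isomorphic U V \<longleftrightarrow> (\<exists>f. bij_betw f U V \<and>
     (\<forall>u\<in>U. \<forall>v\<in>U. f (vadd u v) = vadd (f u) (f v)))"

end

theory Submission imports Defs begin

lemma unc_natset: "uncountable (UNIV :: nat set set)"
proof
  assume "countable (UNIV :: nat set set)"
  then obtain f :: "nat \<Rightarrow> nat set" where "range f = UNIV"
    using range_from_nat_into[of "UNIV :: nat set set"] by blast
  then obtain n where "f n = {m. m \<notin> f m}" by (metis UNIV_I imageE)
  then show False by blast
qed

definition eps :: "nat set \<Rightarrow> nat \<Rightarrow> nat" where
  "eps A d = (if d - 1 \<in> A then 2 else 3)"

definition mm :: "nat set \<Rightarrow> nat \<Rightarrow> nat" where
  "mm A d = 2 * d + eps A d"

definition TT :: "nat set \<Rightarrow> (nat \<times> nat) set" where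
  "TT A = {p. (snd p = 0 \<and> fst p \<ge> 1) \<or> (snd p \<ge> 1 \<and> fst p \<ge> mm A (snd p))}"

definition padd :: "nat \<times> nat \<Rightarrow> nat \<times> nat \<Rightarrow> nat \<times> nat" where
  "padd p q = (fst p + fst q, snd p + snd q)"

lemma eps_bnd: "2 \<le> eps A d" "eps A d \<le> 3" by (auto simp: eps_def)

lemma TT_fst: "p \<in> TT A \<Longrightarrow> fst p \<ge> 1"
  using eps_bnd[of A "snd p"] by (auto simp: TT_def mm_def)

lemma TT_closed: "p \<in> TT A \<Longrightarrow> q \<in> TT A \<Longrightarrow> padd p q \<in> TT A"
  using eps_bnd[of A "snd p"] eps_bnd[of A "snd q"] eps_bnd[of A "snd p + snd q"]
  by (auto simp: TT_def mm_def padd_def)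

definition atomT :: "nat set \<Rightarrow> nat \<times> nat \<Rightarrow> bool" where
  "atomT A p \<longleftrightarrow> p \<in> TT A \<and> \<not> (\<exists>q\<in>TT A. \<exists>r\<in>TT A. p = padd q r)"

lemma decomp:
  assumes "p \<in> TT A" "p \<noteq> (1,0)" "\<not> (\<exists>d\<ge>1. p = (mm A d, d))"
  shows "(fst p - 1, snd p) \<in> TT A \<and> p = padd (1,0) (fst p - 1, snd p)"
  using assms TT_fst[OF assms(1)] unfolding TT_def padd_def
  by (cases p) (auto simp: mm_def)

lemma atom_e: "atomT A (1,0)"
  unfolding atomT_def
proof (intro conjI)
  show "(1,0) \<in> TT A" by (simp add: TT_def)
  show "\<not> (\<exists>q\<in>TT A. \<exists>r\<in>TT A. (1::nat,0::nat) = padd q r)"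
  proof
    assume "\<exists>q\<in>TT A. \<exists>r\<in>TT A. (1::nat,0::nat) = padd q r"
    then obtain q r where q: "q \<in> TT A" and r: "r \<in> TT A" and e: "(1::nat,0::nat) = padd q r" by blast
    have "fst q \<ge> 1" "fst r \<ge> 1" using TT_fst q r by auto
    then show False using e by (simp add: padd_def)
  qed
qed

lemma atom_a: assumes "d \<ge> 1" shows "atomT A (mm A d, d)"
  unfolding atomT_def
proof (intro conjI)
  show "(mm A d, d) \<in> TT A" using assms by (simp add: TT_def)
  show "\<not> (\<exists>q\<in>TT A. \<exists>r\<in>TT A. (mm A d, d) = padd q r)"
  proof
    assume "\<exists>q\<in>TT A. \<exists>r\<in>TT A. (mm A d, d) = padd q r"
    then obtain q r where q: "q \<in> TT A" and r: "r \<in> TT A" and e: "(mm A d, d) = padd q r" by blast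
    have "fst q \<ge> 1" "fst r \<ge> 1" using TT_fst q r by auto
    then show False
      using assms q r e eps_bnd[of A "snd q"] eps_bnd[of A "snd r"] eps_bnd[of A d]
      unfolding TT_def padd_def mm_def by auto
  qed
qed

lemma atom_iff: "atomT A p \<longleftrightarrow> p = (1,0) \<or> (\<exists>d\<ge>1. p = (mm A d, d))"
  using atom_e atom_a decomp unfolding atomT_def by metis

lemma rel_a:
  assumes "d \<ge> 1" "d' \<ge> 1"
  shows "padd (mm A d, d) (mm A d', d') = padd (mm A (d+d'), d+d') (eps A d + eps A d' - eps A (d+d'), 0)"
    and "eps A d + eps A d' - eps A (d+d') \<ge> 1"
  using eps_bnd[of A d] eps_bnd[of A d'] eps_bnd[of A "d+d'"]
  by (auto simp: padd_def mm_def)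

lemma iso_TT:
  assumes bij: "bij_betw g (TT A) (TT B)"
    and hom: "\<forall>p\<in>TT A. \<forall>q\<in>TT A. g (padd p q) = padd (g p) (g q)"
  shows "A = B"
proof -
  have inj: "inj_on g (TT A)" and img: "g ` TT A = TT B" using bij by (auto simp: bij_betw_def)
  have at1: "atomT B (g p)" if "atomT A p" for p
  proof -
    have p: "p \<in> TT A" using that by (simp add: atomT_def)
    have gp: "g p \<in> TT B" using p img by blast
    show ?thesis unfolding atomT_def
    proof (intro conjI gp notI)
      assume "\<exists>q\<in>TT B. \<exists>r\<in>TT B. g p = padd q r"
      then obtain q r where q: "q \<in> TT B" and r: "r \<in> TT B" and e: "g p = padd q r" by blast
      obtain q' where q': "q' \<in> TT A" "q = g q'" using q img by blast
      obtain r' where r': "r' \<in> TT A" "r = g r'" using r img by blast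
      have "g p = g (padd q' r')" using e q' r' hom by simp
      then have "p = padd q' r'" using inj p TT_closed[OF q'(1) r'(1)] by (auto dest: inj_onD)
      then show False using that q' r' by (auto simp: atomT_def)
    qed
  qed
  have at2: "\<exists>p. atomT A p \<and> g p = v" if "atomT B v" for v
  proof -
    have "v \<in> TT B" using that by (simp add: atomT_def)
    then obtain p where p: "p \<in> TT A" "v = g p" using img by blast
    have "atomT A p"
      unfolding atomT_def
    proof (intro conjI p notI)
      assume "\<exists>q\<in>TT A. \<exists>r\<in>TT A. p = padd q r"
      then obtain q r where q: "q \<in> TT A" and r: "r \<in> TT A" and e: "p = padd q r" by blast
      have "v = padd (g q) (g r)" using p e hom q r by simp
      moreover have "g q \<in> TT B" "g r \<in> TT B" using q r img by auto
      ultimately show False using that by (auto simp: atomT_def)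
    qed
    then show ?thesis using p by blast
  qed
  have e1: "g (1,0) = (1,0)"
  proof (rule ccontr)
    assume ne: "g (1,0) \<noteq> (1,0)"
    have "atomT B (g (1,0))" using at1 atom_e by blast
    then obtain c where c: "c \<ge> 1" "g (1,0) = (mm B c, c)" using ne atom_iff by blast
    have "(2,0) \<in> TT B" by (simp add: TT_def)
    then obtain p where p: "p \<in> TT A" "g p = (2,0)" using img by (metis imageE)
    have "\<not> atomT B (2,0)"
    proof -
      have "(1::nat,0::nat) \<in> TT B" by (simp add: TT_def)
      moreover have "(2::nat,0::nat) = padd (1,0) (1,0)" by (simp add: padd_def)
      ultimately show ?thesis unfolding atomT_def by blast
    qed
    then have "\<not> atomT A p" using at1 p by metis
    then have "p \<noteq> (1,0) \<and> \<not> (\<exists>d\<ge>1. p = (mm A d, d))" using atom_iff by blast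
    then have pp: "(fst p - 1, snd p) \<in> TT A" "p = padd (1,0) (fst p - 1, snd p)"
      using decomp p(1) by blast+
    have "g p = padd (g (1,0)) (g (fst p - 1, snd p))"
      using hom pp atom_e by (metis atomT_def)
    then show False using p c by (simp add: padd_def)
  qed
  have gn: "g (n,0) = (n,0)" if "n \<ge> 1" for n
    using that
  proof (induction n rule: dec_induct)
    case base then show ?case using e1 by simp
  next
    case (step n)
    have "(n,0) \<in> TT A" "(1,0) \<in> TT A" using step by (auto simp: TT_def)
    then have "g (padd (n,0) (1,0)) = padd (g (n,0)) (g (1,0))" using hom by blast
    then show ?case using step e1 by (simp add: padd_def)
  qed
  define \<tau> where "\<tau> d = snd (g (mm A d, d))" for d
  have ga: "g (mm A d, d) = (mm B (\<tau> d), \<tau> d) \<and> \<tau> d \<ge> 1" if "d \<ge> 1" for d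
  proof -
    have at: "atomT B (g (mm A d, d))" using at1 atom_a that by blast
    have "(mm A d, d) \<in> TT A" "(1,0) \<in> TT A" using that by (auto simp: TT_def)
    moreover have "(mm A d, d) \<noteq> (1,0)" using that by simp
    ultimately have "g (mm A d, d) \<noteq> (1,0)" using e1 inj by (metis inj_onD)
    then obtain c where "c \<ge> 1" "g (mm A d, d) = (mm B c, c)" using at atom_iff by blast
    then show ?thesis by (simp add: \<tau>_def)
  qed
  have rel: "\<tau> (d+d') = \<tau> d + \<tau> d' \<and>
      mm B (\<tau> d) + mm B (\<tau> d') = mm B (\<tau> (d+d')) + (eps A d + eps A d' - eps A (d+d'))"
    if "d \<ge> 1" "d' \<ge> 1" for d d'
  proof -
    note r = rel_a[OF that, of A]
    define j where "j = eps A d + eps A d' - eps A (d+d')"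
    have m: "(mm A d, d) \<in> TT A" "(mm A d', d') \<in> TT A" "(mm A (d+d'), d+d') \<in> TT A" "(j,0) \<in> TT A"
      using that r(2) by (auto simp: TT_def j_def)
    have "g (padd (mm A d, d) (mm A d', d')) = g (padd (mm A (d+d'), d+d') (j, 0))"
      using r(1) by (simp add: j_def)
    then have "padd (g (mm A d, d)) (g (mm A d', d')) = padd (g (mm A (d+d'), d+d')) (g (j,0))"
      using hom m by simp
    moreover have "g (j,0) = (j,0)" using gn r(2) by (simp add: j_def)
    ultimately show ?thesis using ga[OF that(1)] ga[OF that(2)] ga[of "d+d'"] that
      by (simp add: padd_def j_def)
  qed
  have tlin: "\<tau> d = d * \<tau> 1" if "d \<ge> 1" for d
    using that
  proof (induction d rule: dec_induct)
    case base then show ?case by simp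
  next
    case (step n)
    then show ?case using rel[of n 1] by simp
  qed
  have "atomT B (mm B 1, 1)" using atom_a by simp
  then obtain p where p: "atomT A p" "g p = (mm B 1, 1)" using at2 by blast
  then have "p \<noteq> (1,0)" using e1 by auto
  then obtain d where d: "d \<ge> 1" "p = (mm A d, d)" using p atom_iff by blast
  then have "\<tau> d = 1" using ga p by auto
  then have t1: "\<tau> 1 = 1" using tlin[OF d(1)] by simp
  have tid: "\<tau> d = d" if "d \<ge> 1" for d using tlin[OF that] t1 by simp
  define \<delta> where "\<delta> d = int (eps A d) - int (eps B d)" for d
  have drel: "\<delta> (d + 1) = \<delta> d + \<delta> 1" if "d \<ge> 1" for d
  proof -
    have "mm B d + mm B 1 = mm B (d+1) + (eps A d + eps A 1 - eps A (d+1))"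
      using rel[OF that, of 1] tid[OF that] tid[of 1] tid[of "d+1"] by simp
    then show ?thesis
      using eps_bnd[of A d] eps_bnd[of A 1] eps_bnd[of A "d+1"]
        eps_bnd[of B d] eps_bnd[of B 1] eps_bnd[of B "d+1"]
      by (simp add: \<delta>_def mm_def)
  qed
  have dlin: "\<delta> d = int d * \<delta> 1" if "d \<ge> 1" for d
    using that
  proof (induction d rule: dec_induct)
    case base then show ?case by simp
  next
    case (step n)
    then show ?case using drel[of n] by (simp add: algebra_simps)
  qed
  have "\<delta> 2 = 2 * \<delta> 1" using dlin[of 2] by simp
  moreover have "\<bar>\<delta> 2\<bar> \<le> 1" using eps_bnd[of A 2] eps_bnd[of B 2] by (simp add: \<delta>_def)
  ultimately have d1: "\<delta> 1 = 0" by linarith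
  have ee: "eps A (Suc n) = eps B (Suc n)" for n
    using dlin[of "Suc n"] d1 by (simp add: \<delta>_def)
  show "A = B"
  proof (rule set_eqI)
    fix n show "n \<in> A \<longleftrightarrow> n \<in> B" using ee[of n] by (auto simp: eps_def split: if_splits)
  qed
qed


definition emb :: "nat \<Rightarrow> nat \<times> nat \<Rightarrow> (nat \<Rightarrow> nat)" where
  "emb k p = (\<lambda>i. if i = 0 then fst p else if i < k then fst p + snd p else 0)"

definition dec :: "(nat \<Rightarrow> nat) \<Rightarrow> nat \<times> nat" where
  "dec v = (v 0, v 1 - v 0)"

definition UU :: "nat \<Rightarrow> nat set \<Rightarrow> (nat \<Rightarrow> nat) set" where
  "UU k A = emb k ` TT A"

lemma vadd_emb: "vadd (emb k p) (emb k q) = emb k (padd p q)"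
  by (auto simp: vadd_def emb_def padd_def)

lemma dec_emb: "k \<ge> 2 \<Longrightarrow> dec (emb k p) = p"
  by (cases p) (simp add: dec_def emb_def)

lemma UU_sub: assumes "k \<ge> 2" shows "subdirect_product k (UU k A)"
  unfolding subdirect_product_def subsemigroup_NPow_def
proof (intro conjI ballI allI impI)
  show "UU k A \<subseteq> NPow k"
  proof
    fix v assume "v \<in> UU k A"
    then obtain p where p: "p \<in> TT A" "v = emb k p" by (auto simp: UU_def)
    have "fst p \<ge> 1" using TT_fst p(1) .
    then show "v \<in> NPow k" using p(2) assms by (simp add: NPow_def emb_def)
  qed
  fix u v assume "u \<in> UU k A" "v \<in> UU k A"
  then obtain p q where "p \<in> TT A" "q \<in> TT A" "u = emb k p" "v = emb k q" by (auto simp: UU_def)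
  then show "vadd u v \<in> UU k A" using vadd_emb TT_closed by (auto simp: UU_def)
next
  fix i assume i: "i < k"
  show "(\<lambda>v. v i) ` UU k A = {n. 1 \<le> n}"
  proof
    show "(\<lambda>v. v i) ` UU k A \<subseteq> {n. 1 \<le> n}"
      using TT_fst i by (fastforce simp: UU_def emb_def)
    show "{n. 1 \<le> n} \<subseteq> (\<lambda>v. v i) ` UU k A"
    proof
      fix n :: nat assume "n \<in> {n. 1 \<le> n}"
      then have "(n,0) \<in> TT A" by (simp add: TT_def)
      moreover have "emb k (n,0) i = n" using i by (simp add: emb_def)
      ultimately show "n \<in> (\<lambda>v. v i) ` UU k A" unfolding UU_def by (metis image_eqI)
    qed
  qed
qed

lemma UU_iso: assumes k: "k \<ge> 2" and iso: "sg_isomorphic (UU k A) (UU k B)" shows "A = B"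
proof -
  obtain f where bf: "bij_betw f (UU k A) (UU k B)"
    and hf: "\<forall>u\<in>UU k A. \<forall>v\<in>UU k A. f (vadd u v) = vadd (f u) (f v)"
    using iso by (auto simp: sg_isomorphic_def)
  have injemb: "inj_on (emb k) X" for X by (rule inj_onI) (metis dec_emb k)
  have b1: "bij_betw (emb k) (TT A) (UU k A)" using injemb by (simp add: bij_betw_def UU_def)
  have b3: "bij_betw dec (UU k B) (TT B)"
    unfolding bij_betw_def
  proof
    show "inj_on dec (UU k B)" by (rule inj_onI) (auto simp: UU_def dec_emb[OF k])
    show "dec ` UU k B = TT B" by (force simp: UU_def dec_emb[OF k])
  qed
  define g where "g = dec \<circ> f \<circ> emb k"
  have bg: "bij_betw g (TT A) (TT B)" unfolding g_def
    using bij_betw_trans[OF bij_betw_trans[OF b1 bf] b3] by (simp add: comp_assoc)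
  have hg: "\<forall>p\<in>TT A. \<forall>q\<in>TT A. g (padd p q) = padd (g p) (g q)"
  proof (intro ballI)
    fix p q assume p: "p \<in> TT A" and q: "q \<in> TT A"
    have ep: "emb k p \<in> UU k A" "emb k q \<in> UU k A" using p q by (auto simp: UU_def)
    have fe: "f (emb k r) = emb k (g r)" if "r \<in> TT A" for r
    proof -
      have "f (emb k r) \<in> UU k B" using bf that by (auto simp: bij_betw_def UU_def)
      then obtain s where "f (emb k r) = emb k s" by (auto simp: UU_def)
      then show ?thesis by (simp add: g_def dec_emb[OF k])
    qed
    have "g (padd p q) = dec (f (vadd (emb k p) (emb k q)))" by (simp add: g_def vadd_emb)
    also have "\<dots> = dec (vadd (emb k (g p)) (emb k (g q)))" using hf ep fe p q by simp
    also have "\<dots> = padd (g p) (g q)" by (simp add: vadd_emb dec_emb[OF k])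
    finally show "g (padd p q) = padd (g p) (g q)" .
  qed
  show ?thesis using iso_TT[OF bg hg] .
qed

theorem theoremB:
  fixes k :: nat
  assumes "k \<ge> 2"
  shows "\<exists>S. S \<subseteq> {U. subdirect_product k U} \<and> uncountable S \<and>
           (\<forall>U\<in>S. \<forall>V\<in>S. U \<noteq> V \<longrightarrow> \<not> sg_isomorphic U V)"
proof (intro exI conjI)
  let ?S = "range (UU k)"
  show "?S \<subseteq> {U. subdirect_product k U}" using UU_sub assms by auto
  have idiso: "sg_isomorphic U U" for U
    unfolding sg_isomorphic_def by (rule exI[of _ id]) auto
  have inj: "inj (UU k)"
    by (rule injI) (metis UU_iso assms idiso)
  show "uncountable ?S"
  proof
    assume "countable ?S"
    then have "countable (UNIV :: nat set set)" using countable_image_inj_on inj by blast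
    then show False using unc_natset by blast
  qed
  show "\<forall>U\<in>?S. \<forall>V\<in>?S. U \<noteq> V \<longrightarrow> \<not> sg_isomorphic U V"
    using UU_iso assms by blast
qed

end
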